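(* For every integer $j\ge0$, the graph $K_{j+2}\cup K^*_{j+1}$ on $n=2j+3$ vertices satisfies $\lambda_2-\lambda_{n-j}=j+2$, and hence \[s_{1,j}\ge\frac{j+2}{2j+3}.\]
   Context: $K_{j+2}\cup K^*_{j+1}$ denotes the disjoint union of the complete graph $K_{j+2}$ (no loops) and the complete graph $K_{j+1}$ with a loop at each of its $j+1$ vertices. Graphs with loops are identified with their symmetric $(0,1)$ adjacency matrices (diagonal entry $1$ iff loop), eigenvalues listed $\lambda_1\ge\cdots\ge\lambda_n$. For a simple graph $G$ on $n$ vertices, ${\rm spread}_{i,j}(G)=\lambda_{i+1}(G)-\lambda_{n-j}(G)$; ${\rm spread}_{i,j}(n)$ is its maximum over simple graphs on $n$ vertices and $s_{i,j}=\lim_{n\to\infty}{\rm spread}_{i,j}(n)/n$ (known to exist, and known to equal the analogous limit taken over graphs with at most one loop per vertex). *)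

theory Defs
  imports Complex_Main "Jordan_Normal_Form.Char_Poly"
begin

text \<open>For a real symmetric matrix all n roots are real.\<close>
definition eigs_desc :: "real mat \<Rightarrow> real list" where
  "eigs_desc A = rev (sorted_list_of_multiset (proots (char_poly A)))"

definition eig :: "real mat \<Rightarrow> nat \<Rightarrow> real" where
  "eig A k = eigs_desc A ! (k - 1)"

definition simple_adj :: "nat \<Rightarrow> real mat \<Rightarrow> bool" where
  "simple_adj n A \<longleftrightarrow> A \<in> carrier_mat n n \<and>
     (\<forall>a<n. \<forall>b<n. (A $$ (a,b) = 0 \<or> A $$ (a,b) = 1) \<and> A $$ (a,b) = A $$ (b,a)) \<and>
     (\<forall>a<n. A $$ (a,a) = 0)"

definition spread_g :: "nat \<Rightarrow> nat \<Rightarrow> real mat \<Rightarrow> real" where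
  "spread_g i j A = eig A (i + 1) - eig A (dim_row A - j)"

definition spread_n :: "nat \<Rightarrow> nat \<Rightarrow> nat \<Rightarrow> real" where
  "spread_n i j n = Max {spread_g i j A | A. simple_adj n A}"

definition s_lim :: "nat \<Rightarrow> nat \<Rightarrow> real" where
  "s_lim i j = lim (\<lambda>n. spread_n i j n / real n)"

text \<open>Adjacency matrix of K_{j+2} (vertices 0..j+1, no loops) disjoint union
  K*_{j+1} (vertices j+2..2j+2, complete with a loop at every vertex).\<close>
definition KK_loop :: "nat \<Rightarrow> real mat" where
  "KK_loop j = mat (2*j+3) (2*j+3) (\<lambda>(a,b).
     if (a < j+2 \<and> b < j+2 \<and> a \<noteq> b) \<or> (j+2 \<le> a \<and> j+2 \<le> b) then 1 else 0)"

end

theory Submission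
  imports Defs
begin


definition Nm :: "nat \<Rightarrow> nat \<Rightarrow> real mat" where
  "Nm n k = mat n n (\<lambda>(a,b). if k \<le> b \<and> a = b mod k then 1 else 0)"

lemma NN: assumes "k \<le> n" "0 < k" shows "Nm n k * Nm n k = 0\<^sub>m n n"
proof (rule eq_matI)
  fix i j assume ij: "i < dim_row (0\<^sub>m n n)" "j < dim_col (0\<^sub>m n n)"
  show "(Nm n k * Nm n k) $$ (i, j) = 0\<^sub>m n n $$ (i, j)"
    using ij assms by (auto simp: Nm_def scalar_prod_def intro!: sum.neutral) (metis mod_less_divisor not_le)
qed (auto simp: Nm_def)

lemma PPi: assumes "k \<le> n" "0 < k" shows "(1\<^sub>m n - Nm n k) * (1\<^sub>m n + Nm n k) = 1\<^sub>m n"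
proof -
  have N: "Nm n k \<in> carrier_mat n n" by (simp add: Nm_def)
  have "(1\<^sub>m n - Nm n k) * (1\<^sub>m n + Nm n k) = 1\<^sub>m n * (1\<^sub>m n + Nm n k) - Nm n k * (1\<^sub>m n + Nm n k)"
    using N by (simp add: minus_mult_distrib_mat[OF one_carrier_mat N add_carrier_mat[OF N]])
  also have "\<dots> = (1\<^sub>m n + Nm n k) - (Nm n k + Nm n k * Nm n k)"
    using N by (simp add: mult_add_distrib_mat[OF N one_carrier_mat N])
  also have "\<dots> = 1\<^sub>m n" using N NN[OF assms] by (auto intro!: eq_matI)
  finally show ?thesis .
qed

lemma PiP: assumes "k \<le> n" "0 < k" shows "(1\<^sub>m n + Nm n k) * (1\<^sub>m n - Nm n k) = 1\<^sub>m n"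
proof -
  have N: "Nm n k \<in> carrier_mat n n" by (simp add: Nm_def)
  have "(1\<^sub>m n + Nm n k) * (1\<^sub>m n - Nm n k) = 1\<^sub>m n * (1\<^sub>m n - Nm n k) + Nm n k * (1\<^sub>m n - Nm n k)"
    using N by (simp add: add_mult_distrib_mat[OF one_carrier_mat N minus_carrier_mat[OF N]])
  also have "\<dots> = (1\<^sub>m n - Nm n k) + (Nm n k - Nm n k * Nm n k)"
    using N by (simp add: mult_minus_distrib_mat[OF N one_carrier_mat N])
  also have "\<dots> = 1\<^sub>m n" using N NN[OF assms] by (auto intro!: eq_matI)
  finally show ?thesis .
qed



lemma AN_entry: assumes A: "A \<in> carrier_mat n n" and k: "0 < k" "k \<le> n" and ab: "a < n" "b < n"
  shows "(A * Nm n k) $$ (a,b) = (if k \<le> b then A $$ (a, b mod k) else 0)"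
proof -
  have "(A * Nm n k) $$ (a,b) = (\<Sum>c<n. A $$ (a,c) * (if k \<le> b \<and> c = b mod k then 1 else 0))"
    using A ab by (simp add: Nm_def scalar_prod_def lessThan_atLeast0)
  also have "\<dots> = (\<Sum>c<n. if c = b mod k then (if k \<le> b then A $$ (a,c) else 0) else 0)"
    by (rule sum.cong) auto
  also have "\<dots> = (if k \<le> b then A $$ (a, b mod k) else 0)"
    using k ab by (subst sum.delta) (auto intro: order.strict_trans[OF mod_less_divisor])
  finally show ?thesis .
qed

lemma NB_entry: assumes B: "B \<in> carrier_mat n n" and k: "0 < k" "k \<le> n" and ab: "a < n" "b < n"
  shows "(Nm n k * B) $$ (a,b) = (\<Sum>c\<in>{c. c < n \<and> k \<le> c \<and> a = c mod k}. B $$ (c,b))"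
proof -
  have "(Nm n k * B) $$ (a,b) = (\<Sum>c<n. (if k \<le> c \<and> a = c mod k then 1 else 0) * B $$ (c,b))"
    using B ab by (simp add: Nm_def scalar_prod_def lessThan_atLeast0)
  also have "\<dots> = (\<Sum>c\<in>{c. c < n \<and> k \<le> c \<and> a = c mod k}. B $$ (c,b))"
    by (simp add: sum.If_cases[of "{..<n}"] Int_def if_distrib[of "\<lambda>x. x * _"] cong: if_cong)
  finally show ?thesis .
qed

lemma Pi_car: "N \<in> carrier_mat n n \<Longrightarrow> (1\<^sub>m n + N) \<in> carrier_mat n n" by auto

lemma T_entry_high: fixes A :: "real mat"
  assumes A: "A \<in> carrier_mat n n" and k: "0 < k" "k \<le> n" and ab: "a < n" "b < n" "k \<le> b"
  and col: "\<And>a b. a < n \<Longrightarrow> k \<le> b \<Longrightarrow> b < n \<Longrightarrow> A $$ (a,b) - A $$ (a, b mod k)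
       = lam b * ((if a = b then 1 else 0) - (if a = b mod k then 1 else 0))"
  shows "((1\<^sub>m n + Nm n k) * A * (1\<^sub>m n - Nm n k)) $$ (a,b) = (if a = b then lam b else 0)"
proof -
  have N: "Nm n k \<in> carrier_mat n n" by (simp add: Nm_def)
  let ?B = "A * (1\<^sub>m n - Nm n k)"
  have B: "?B \<in> carrier_mat n n" using A N by auto
  have Bent: "?B $$ (c,b) = lam b * ((if c = b then 1 else 0) - (if c = b mod k then 1 else 0))" if "c < n" for c
  proof -
    have "?B = A - A * Nm n k" using A N by (simp add: mult_minus_distrib_mat[OF A one_carrier_mat N])
    hence "?B $$ (c,b) = A $$ (c,b) - (A * Nm n k) $$ (c,b)" using A N that ab by simp
    also have "\<dots> = A $$ (c,b) - A $$ (c, b mod k)" using AN_entry[OF A k that ab(2)] ab by simp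
    finally show ?thesis using col[OF that ab(3) ab(2)] by simp
  qed
  have eq: "(1\<^sub>m n + Nm n k) * A * (1\<^sub>m n - Nm n k) = ?B + Nm n k * ?B"
    using A N B by (simp add: assoc_mult_mat[OF Pi_car[OF N] A minus_carrier_mat[OF N]] add_mult_distrib_mat[OF one_carrier_mat N B])
  have "(Nm n k * ?B) $$ (a,b) = (\<Sum>c\<in>{c. c < n \<and> k \<le> c \<and> a = c mod k}. ?B $$ (c,b))"
    by (rule NB_entry[OF B k ab(1,2)])
  also have "\<dots> = (\<Sum>c\<in>{c. c < n \<and> k \<le> c \<and> a = c mod k}. if c = b then lam b else 0)"
  proof (rule sum.cong[OF refl])
    fix c assume c: "c \<in> {c. c < n \<and> k \<le> c \<and> a = c mod k}"
    hence "c \<noteq> b mod k" using k by (metis mem_Collect_eq mod_less_divisor not_le)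
    thus "?B $$ (c,b) = (if c = b then lam b else 0)" using Bent c by auto
  qed
  also have "\<dots> = (if a = b mod k then lam b else 0)"
    using ab by (simp add: sum.delta[of "{c. c < n \<and> k \<le> c \<and> a = c mod k}" b "\<lambda>_. lam b"])
  finally have "(Nm n k * ?B) $$ (a,b) = (if a = b mod k then lam b else 0)" .
  thus ?thesis unfolding eq using B N ab Bent[OF ab(1)] by auto
qed

lemma T_entry_low: fixes A :: "real mat"
  assumes A: "A \<in> carrier_mat n n" and k: "0 < k" "k \<le> n" and ab: "a < k" "b < k"
  shows "((1\<^sub>m n + Nm n k) * A * (1\<^sub>m n - Nm n k)) $$ (a,b) = (\<Sum>c\<in>{c. c < n \<and> c mod k = a}. A $$ (c,b))"
proof -
  have N: "Nm n k \<in> carrier_mat n n" by (simp add: Nm_def)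
  let ?B = "A * (1\<^sub>m n - Nm n k)"
  have B: "?B \<in> carrier_mat n n" using A N by auto
  have ab': "a < n" "b < n" using ab k by auto
  have Bent: "?B $$ (c,b) = A $$ (c,b)" if "c < n" for c
  proof -
    have "?B = A - A * Nm n k" using A N by (simp add: mult_minus_distrib_mat[OF A one_carrier_mat N])
    hence "?B $$ (c,b) = A $$ (c,b) - (A * Nm n k) $$ (c,b)" using A N that ab' by simp
    thus ?thesis using AN_entry[OF A k that ab'(2)] ab by simp
  qed
  have eq: "(1\<^sub>m n + Nm n k) * A * (1\<^sub>m n - Nm n k) = ?B + Nm n k * ?B"
    using A N B by (simp add: assoc_mult_mat[OF Pi_car[OF N] A minus_carrier_mat[OF N]] add_mult_distrib_mat[OF one_carrier_mat N B])
  have "(Nm n k * ?B) $$ (a,b) = (\<Sum>c\<in>{c. c < n \<and> k \<le> c \<and> a = c mod k}. ?B $$ (c,b))"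
    by (rule NB_entry[OF B k ab'])
  also have "\<dots> = (\<Sum>c\<in>{c. c < n \<and> k \<le> c \<and> a = c mod k}. A $$ (c,b))"
    by (rule sum.cong, auto simp: Bent)
  finally have 1: "(Nm n k * ?B) $$ (a,b) = \<dots>" .
  have split: "{c. c < n \<and> c mod k = a} = insert a {c. c < n \<and> k \<le> c \<and> a = c mod k}"
    using ab ab' by (auto simp: not_le) (metis mod_less not_le)
  have "(\<Sum>c\<in>{c. c < n \<and> c mod k = a}. A $$ (c,b)) = A $$ (a,b) + (\<Sum>c\<in>{c. c < n \<and> k \<le> c \<and> a = c mod k}. A $$ (c,b))"
    unfolding split using ab by (subst sum.insert) auto
  thus ?thesis unfolding eq using B N ab' Bent[OF ab'(1)] 1 by auto
qed



lemma char_poly_four_block_ur0: fixes A1 :: "'a :: idom mat"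
  assumes A1: "A1 \<in> carrier_mat n n" and A3: "A3 \<in> carrier_mat m n" and A4: "A4 \<in> carrier_mat m m"
  shows "char_poly (four_block_mat A1 (0\<^sub>m n m) A3 A4) = char_poly A1 * char_poly A4"
proof -
  let ?cm = "\<lambda> A. [:0, 1:] \<cdot>\<^sub>m 1\<^sub>m (dim_row A) + map_mat (\<lambda>a. [:- a:]) A"
  let ?B3 = "map_mat (\<lambda>a. [:- a:]) A3"
  have "char_poly (four_block_mat A1 (0\<^sub>m n m) A3 A4) = det (?cm (four_block_mat A1 (0\<^sub>m n m) A3 A4))"
    unfolding char_poly_defs by simp
  also have "?cm (four_block_mat A1 (0\<^sub>m n m) A3 A4) = four_block_mat (?cm A1) (0\<^sub>m n m) ?B3 (?cm A4)"
    by (rule eq_matI, insert A1 A3 A4, auto simp: one_poly_def)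
  also have "det \<dots> = det (?cm A1) * det (?cm A4)"
    by (rule det_four_block_mat_upper_right_zero, insert A1 A3 A4, auto)
  also have "\<dots> = char_poly A1 * char_poly A4" unfolding char_poly_defs ..
  finally show ?thesis .
qed

lemma char_poly_diag: fixes f :: "nat \<Rightarrow> 'a :: comm_ring_1"
  shows "char_poly (mat m m (\<lambda>(i,j). if i = j then f i else 0)) = (\<Prod>i<m. [:- f i, 1:])"
proof -
  let ?D = "mat m m (\<lambda>(i,j). if i = j then f i else 0)"
  have D: "?D \<in> carrier_mat m m" by simp
  have ut: "upper_triangular ?D" by (auto simp: upper_triangular_def)
  have "char_poly ?D = (\<Prod> a \<leftarrow> diag_mat ?D. [:- a, 1:])"
    by (rule char_poly_upper_triangular[OF D ut])
  also have "\<dots> = (\<Prod> i \<leftarrow> [0..<m]. [:- f i, 1:])"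
    unfolding diag_mat_def by (auto simp: comp_def intro!: arg_cong[where f=prod_list] map_cong)
  also have "\<dots> = (\<Prod>i<m. [:- f i, 1:])"
    by (simp add: prod.distinct_set_conv_list[symmetric] atLeast0LessThan)
  finally show ?thesis .
qed

lemma char_poly_reduce: fixes A :: "real mat" and lam :: "nat \<Rightarrow> real"
  assumes A: "A \<in> carrier_mat n n" and k: "0 < k" "k \<le> n"
  and col: "\<And>a b. a < n \<Longrightarrow> k \<le> b \<Longrightarrow> b < n \<Longrightarrow> A $$ (a,b) - A $$ (a, b mod k)
       = lam b * ((if a = b then 1 else 0) - (if a = b mod k then 1 else 0))"
  shows "char_poly A = char_poly (mat k k (\<lambda>(r,s). \<Sum>c\<in>{c. c < n \<and> c mod k = r}. A $$ (c,s)))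
     * (\<Prod>b\<in>{k..<n}. [:- lam b, 1:])"
proof -
  have N: "Nm n k \<in> carrier_mat n n" by (simp add: Nm_def)
  define P where "P = 1\<^sub>m n - Nm n k"
  define Pi where "Pi = 1\<^sub>m n + Nm n k"
  define T where "T = Pi * A * P"
  have P: "P \<in> carrier_mat n n" and Pic: "Pi \<in> carrier_mat n n" using N by (auto simp: P_def Pi_def)
  have T: "T \<in> carrier_mat n n" using P Pic A by (auto simp: T_def)
  have PPi': "P * Pi = 1\<^sub>m n" unfolding P_def Pi_def by (rule PPi[OF k(2,1)])
  have PiP': "Pi * P = 1\<^sub>m n" unfolding P_def Pi_def by (rule PiP[OF k(2,1)])
  have "P * T * Pi = P * (Pi * (A * (P * Pi)))"
    unfolding T_def using P Pic A by (simp add: assoc_mult_mat[of _ n n _ n _ n])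
  also have "\<dots> = (P * Pi) * A" using P Pic A PPi' by (simp add: assoc_mult_mat[of _ n n _ n _ n, symmetric])
  also have "\<dots> = A" using PPi' A by simp
  finally have sim: "similar_mat A T"
    by (intro similar_matI[of _ _ P Pi n], insert A T P Pic PPi' PiP', auto)
  define Q where "Q = mat k k (\<lambda>(r,s). \<Sum>c\<in>{c. c < n \<and> c mod k = r}. A $$ (c,s))"
  define X where "X = mat (n - k) k (\<lambda>(i,j). T $$ (i + k, j))"
  define D :: "real mat" where "D = mat (n - k) (n - k) (\<lambda>(i,j). if i = j then lam (i + k) else 0)"
  have TT: "T = four_block_mat Q (0\<^sub>m k (n - k)) X D"
  proof (rule eq_matI)
    fix i j assume ij: "i < dim_row (four_block_mat Q (0\<^sub>m k (n - k)) X D)" "j < dim_col (four_block_mat Q (0\<^sub>m k (n - k)) X D)"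
    hence ij': "i < n" "j < n" using k by (auto simp: Q_def D_def)
    show "T $$ (i,j) = four_block_mat Q (0\<^sub>m k (n - k)) X D $$ (i,j)"
    proof (cases "j < k")
      case True
      show ?thesis
      proof (cases "i < k")
        case True
        with \<open>j < k\<close> show ?thesis using ij ij' T_entry_low[OF A k True \<open>j<k\<close>]
          by (simp add: Q_def X_def D_def T_def Pi_def P_def)
      next
        case False
        with \<open>j < k\<close> show ?thesis using ij ij' by (simp add: Q_def X_def D_def)
      qed
    next
      case False
      have "T $$ (i,j) = (if i = j then lam j else 0)"
        unfolding T_def Pi_def P_def by (rule T_entry_high[OF A k ij' _ col]) (use False in auto)
      thus ?thesis using ij ij' False by (auto simp: Q_def X_def D_def)
    qed
  qed (use k in \<open>auto simp: Q_def D_def T_def Pi_def P_def Nm_def\<close>)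
  have "char_poly A = char_poly T" by (rule char_poly_similar[OF sim])
  also have "\<dots> = char_poly Q * char_poly D" unfolding TT
    by (rule char_poly_four_block_ur0) (auto simp: Q_def X_def D_def)
  also have "char_poly D = (\<Prod>i<n-k. [:- lam (i + k), 1:])" unfolding D_def by (rule char_poly_diag)
  also have "\<dots> = (\<Prod>b\<in>{k..<n}. [:- lam b, 1:])"
  proof -
    have "(\<Prod>i<n-k. [:- lam (i + k), 1:]) = (\<Prod>i\<in>{0..<n-k}. [:- lam (i + k), 1:])" by (simp add: atLeast0LessThan)
    also have "\<dots> = (\<Prod>b\<in>{0+k..<n-k+k}. [:- lam b, 1:])" by (rule prod.shift_bounds_nat_ivl[symmetric])
    finally show ?thesis using k by simp
  qed
  finally show ?thesis unfolding Q_def .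
qed



lemma char_poly_1x1: "char_poly (mat 1 1 f :: real mat) = [:- f (0,0), 1:]"
proof -
  have "mat 1 1 f = mat 1 1 (\<lambda>(i,j). if i = j then (\<lambda>_. f (0,0)) i else 0)"
    by (rule eq_matI) auto
  thus ?thesis using char_poly_diag[of 1 "\<lambda>_. f (0,0)"] by simp
qed

lemma char_poly_J: fixes c d :: real assumes m: "0 < m"
  shows "char_poly (mat m m (\<lambda>(a,b). c + (if a = b then d else 0)))
     = [:- (c * real m + d), 1:] * [:- d, 1:] ^ (m - 1)"
proof -
  let ?A = "mat m m (\<lambda>(a,b). c + (if a = b then d else 0)) :: real mat"
  have "char_poly ?A = char_poly (mat 1 1 (\<lambda>(r,s). \<Sum>x\<in>{x. x < m \<and> x mod 1 = r}. ?A $$ (x,s)))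
     * (\<Prod>b\<in>{1..<m}. [:- d, 1:])"
    by (rule char_poly_reduce[where lam = "\<lambda>_. d"]) (use m in auto)
  also have "mat 1 1 (\<lambda>(r,s). \<Sum>x\<in>{x. x < m \<and> x mod 1 = r}. ?A $$ (x,s)) = mat 1 1 (\<lambda>_. c * real m + d)"
  proof (rule eq_matI)
    fix i j assume "i < dim_row (mat 1 1 (\<lambda>_::nat\<times>nat. c * real m + d))" "j < dim_col (mat 1 1 (\<lambda>_::nat\<times>nat. c * real m + d))"
    hence ij: "i = 0" "j = 0" by auto
    have "(\<Sum>x\<in>{x. x < m \<and> x mod 1 = 0}. ?A $$ (x,0)) = (\<Sum>x<m. c + (if x = 0 then d else 0))"
      by (rule sum.cong) (auto simp: m)
    also have "\<dots> = c * real m + d" using m by (simp add: sum.distrib)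
    finally show "mat 1 1 (\<lambda>(r,s). \<Sum>x\<in>{x. x < m \<and> x mod 1 = r}. ?A $$ (x,s)) $$ (i,j) = mat 1 1 (\<lambda>_. c * real m + d) $$ (i,j)"
      using ij by simp
  qed simp_all
  also have "char_poly (mat 1 1 (\<lambda>_. c * real m + d)) = [:- (c * real m + d), 1:]"
    using char_poly_1x1[of "\<lambda>_. c * real m + d"] by simp
  finally show ?thesis by simp
qed

lemma card_mod_class: assumes r: "r < p" shows "card {c. c < p * m \<and> c mod p = r} = m"
proof -
  have "{c. c < p * m \<and> c mod p = r} = (\<lambda>i. r + p * i) ` {..<m}"
  proof (rule equalityI; rule subsetI)
    fix c assume c: "c \<in> {c. c < p * m \<and> c mod p = r}"
    hence "c = r + p * (c div p)" using mod_mult_div_eq[of c p] by auto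
    moreover have "c div p < m" using c by (simp add: less_mult_imp_div_less mult.commute)
    ultimately show "c \<in> (\<lambda>i. r + p * i) ` {..<m}" by blast
  next
    fix c assume "c \<in> (\<lambda>i. r + p * i) ` {..<m}"
    then obtain i where i: "i < m" "c = r + p * i" by auto
    have "r + p * i < p + p * i" using r by simp
    also have "\<dots> = p * (Suc i)" by simp
    also have "\<dots> \<le> p * m" using i by (intro mult_le_mono2) auto
    finally show "c \<in> {c. c < p * m \<and> c mod p = r}" using i r by simp
  qed
  moreover have "inj_on (\<lambda>i. r + p * i) {..<m}" using r by (intro inj_onI) auto
  ultimately show ?thesis by (simp add: card_image)
qed

lemma char_poly_multipartite: assumes p: "0 < p" and m: "0 < m"
  shows "char_poly (mat (p*m) (p*m) (\<lambda>(a,b). if a mod p = b mod p then 0 else 1) :: real mat)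
   = ([:- (real m * real p - real m), 1:] * [:real m, 1:] ^ (p - 1)) * [:0, 1:] ^ (p * m - p)"
proof -
  let ?A = "mat (p*m) (p*m) (\<lambda>(a,b). if a mod p = b mod p then 0 else 1) :: real mat"
  have pm: "p \<le> p * m" using m by simp
  have bm: "\<And>b. b mod p < p * m" using p pm by (meson mod_less_divisor order_less_le_trans)
  have "char_poly ?A = char_poly (mat p p (\<lambda>(r,s). \<Sum>x\<in>{x. x < p*m \<and> x mod p = r}. ?A $$ (x,s)))
     * (\<Prod>b\<in>{p..<p*m}. [:- 0, 1:])"
    by (rule char_poly_reduce[where lam = "\<lambda>_. 0"]) (use p pm bm in auto)
  also have "mat p p (\<lambda>(r,s). \<Sum>x\<in>{x. x < p*m \<and> x mod p = r}. ?A $$ (x,s))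
     = mat p p (\<lambda>(a,b). real m + (if a = b then - real m else 0))"
  proof (rule eq_matI)
    fix r s assume rs: "r < dim_row (mat p p (\<lambda>(a,b). real m + (if a = b then - real m else 0)))"
      "s < dim_col (mat p p (\<lambda>(a,b). real m + (if a = b then - real m else 0)))"
    hence rs': "r < p" "s < p" by auto
    have "(\<Sum>x\<in>{x. x < p*m \<and> x mod p = r}. ?A $$ (x,s)) = (\<Sum>x\<in>{x. x < p*m \<and> x mod p = r}. if r = s then 0 else 1)"
      using order_less_le_trans[OF rs'(2) pm] rs' by (intro sum.cong) auto
    also have "\<dots> = (if r = s then 0 else real m)" using card_mod_class[OF rs'(1), of m] by simp
    finally show "mat p p (\<lambda>(r,s). \<Sum>x\<in>{x. x < p*m \<and> x mod p = r}. ?A $$ (x,s)) $$ (r, s) =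
         mat p p (\<lambda>(a,b). real m + (if a = b then - real m else 0)) $$ (r, s)" using rs' by simp
  qed auto
  also have "char_poly (mat p p (\<lambda>(a,b). real m + (if a = b then - real m else 0)))
     = [:- (real m * real p - real m), 1:] * [:real m, 1:] ^ (p - 1)"
    using char_poly_J[OF p, of "real m" "- real m"] by simp
  finally show ?thesis by simp
qed



lemma eigs_desc_sorted: assumes "proots (char_poly A) = mset xs" "sorted xs"
  shows "eigs_desc A = rev xs"
  using assms by (simp add: eigs_desc_def sorted_sort_id)

lemma nz_lin: "[:a, 1:] \<noteq> (0 :: real poly)" by simp

lemma lp_nz: "[:- a, 1:] * [:- b, 1:] ^ n \<noteq> (0 :: real poly)"
  unfolding mult_eq_0_iff power_eq_0_iff by simp

lemma proots_lp: "proots ([:- a, 1:] * [:- b, 1:] ^ n :: real poly) = add_mset a (replicate_mset n b)"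
proof -
  have "proots ([:- a, 1:] * [:- b, 1:] ^ n :: real poly) = proots [:- a, 1:] + proots ([:- b, 1:] ^ n)"
    by (rule proots_mult) (simp_all del: pCons_0_0)
  also have "\<dots> = add_mset a (replicate_mset n b)" by (simp add: proots_power)
  finally show ?thesis .
qed

lemma proots_lp2: "proots (([:- a, 1:] * [:- b, 1:] ^ n) * ([:- c, 1:] * [:- d, 1:] ^ m) :: real poly)
   = add_mset a (replicate_mset n b) + add_mset c (replicate_mset m d)"
  unfolding proots_mult[OF lp_nz lp_nz] proots_lp by simp

lemma KK_char: "char_poly (KK_loop j) =
   ([:- (1 * real (j+2) + -1), 1:] * [:- (-1), 1:] ^ (j + 2 - 1)) * ([:- (1 * real (j+1) + 0), 1:] * [:- 0, 1:] ^ (j + 1 - 1))"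
proof -
  let ?K = "mat (j+2) (j+2) (\<lambda>(a,b). 1 + (if a = b then -1 else 0)) :: real mat"
  let ?L = "mat (j+1) (j+1) (\<lambda>(a,b). 1 + (if a = b then 0 else 0)) :: real mat"
  have eq: "KK_loop j = four_block_mat ?K (0\<^sub>m (j+2) (j+1)) (0\<^sub>m (j+1) (j+2)) ?L"
    by (rule eq_matI) (auto simp: KK_loop_def)
  have "char_poly (KK_loop j) = char_poly ?K * char_poly ?L" unfolding eq
    by (rule char_poly_four_block_ur0) auto
  also have "char_poly ?K = [:- (1 * real (j+2) + -1), 1:] * [:- (-1), 1:] ^ (j + 2 - 1)"
    by (rule char_poly_J) simp
  also have "char_poly ?L = [:- (1 * real (j+1) + 0), 1:] * [:- 0, 1:] ^ (j + 1 - 1)"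
    by (rule char_poly_J) simp
  finally show ?thesis .
qed

lemma KK_proots: "proots (char_poly (KK_loop j)) =
   mset (replicate (j+1) (-1) @ replicate j 0 @ [real j + 1, real j + 1])"
  unfolding KK_char proots_lp2 by (simp add: algebra_simps)

lemma part1: "eig (KK_loop j) 2 - eig (KK_loop j) ((2*j+3) - j) = real j + 2"
proof -
  let ?xs = "replicate (j+1) (-1) @ replicate j 0 @ [real j + 1, real j + 1]"
  have s: "sorted ?xs" by (auto simp: sorted_append)
  have e: "eigs_desc (KK_loop j) = [real j + 1, real j + 1] @ replicate j 0 @ replicate (j+1) (-1)"
    using eigs_desc_sorted[OF KK_proots s] by (simp add: replicate_append_same)
  have "(2*j+3) - j - 1 = 2 + j + 0" by simp
  hence "eig (KK_loop j) ((2*j+3) - j) = -1" unfolding eig_def e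
    by (simp only: nth_append_length_plus) (simp add: nth_append)
  moreover have "eig (KK_loop j) 2 = real j + 1" unfolding eig_def e by simp
  ultimately show ?thesis by simp
qed



definition Gm :: "nat \<Rightarrow> nat \<Rightarrow> real mat" where
  "Gm j m = mat ((j+2)*m + (j+1)*m) ((j+2)*m + (j+1)*m) (\<lambda>(a,b).
     if a < (j+2)*m \<and> b < (j+2)*m then (if a mod (j+2) = b mod (j+2) then 0 else 1)
     else if (j+2)*m \<le> a \<and> (j+2)*m \<le> b then (if a = b then 0 else 1) else 0)"

lemma nz_gen: "[:- a, 1:] ^ n \<noteq> (0 :: real poly)" "[:- a, 1:] \<noteq> (0 :: real poly)"
  unfolding power_eq_0_iff by simp_all

lemma Gm_char: assumes m: "0 < m"
  shows "char_poly (Gm j m) =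
   (([:- (real m * real (j+2) - real m), 1:] * [:real m, 1:] ^ (j+2 - 1)) * [:0, 1:] ^ ((j+2) * m - (j+2)))
   * ([:- (1 * real ((j+1)*m) + -1), 1:] * [:- (-1), 1:] ^ ((j+1)*m - 1))"
proof -
  let ?M = "mat ((j+2)*m) ((j+2)*m) (\<lambda>(a,b). if a mod (j+2) = b mod (j+2) then 0 else 1) :: real mat"
  let ?C = "mat ((j+1)*m) ((j+1)*m) (\<lambda>(a,b). 1 + (if a = b then -1 else 0)) :: real mat"
  have eq: "Gm j m = four_block_mat ?M (0\<^sub>m ((j+2)*m) ((j+1)*m)) (0\<^sub>m ((j+1)*m) ((j+2)*m)) ?C"
    by (rule eq_matI) (auto simp: Gm_def)
  have "char_poly (Gm j m) = char_poly ?M * char_poly ?C" unfolding eq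
    by (rule char_poly_four_block_ur0) auto
  also have "char_poly ?M = (([:- (real m * real (j+2) - real m), 1:] * [:real m, 1:] ^ (j+2 - 1)) * [:0, 1:] ^ ((j+2) * m - (j+2)))"
    by (rule char_poly_multipartite) (use m in auto)
  also have "char_poly ?C = [:- (1 * real ((j+1)*m) + -1), 1:] * [:- (-1), 1:] ^ ((j+1)*m - 1)"
    by (rule char_poly_J) (use m in simp)
  finally show ?thesis .
qed

lemma Gm_proots: assumes m: "0 < m"
  shows "proots (char_poly (Gm j m)) = mset (replicate (j+1) (- real m) @ replicate ((j+1)*m - 1) (-1)
      @ replicate ((j+2) * m - (j+2)) 0 @ [real ((j+1)*m) - 1, real ((j+1)*m)])"
proof -
  have a: "[:real m, 1:] = [:- (- real m), 1:]" by simp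
  have z: "[:0::real, 1:] = [:- 0, 1:]" by (simp only: minus_zero)
  have nz1: "([:- (real m * real (j+2) - real m), 1:] * [:real m, 1:] ^ (j+2 - 1)) \<noteq> 0"
    unfolding a by (rule lp_nz)
  have nz2: "[:0::real, 1:] ^ ((j+2) * m - (j+2)) \<noteq> 0" unfolding z by (rule nz_gen)
  have nz3: "(([:- (real m * real (j+2) - real m), 1:] * [:real m, 1:] ^ (j+2 - 1)) * [:0, 1:] ^ ((j+2) * m - (j+2))) \<noteq> 0"
    using nz1 nz2 by simp
  show ?thesis unfolding Gm_char[OF m] proots_mult[OF nz3 lp_nz] proots_mult[OF nz1 nz2]
    unfolding a proots_lp z proots_power proots_linear_factor
    by (simp add: algebra_simps)
qed

lemma Gm_spread: assumes m: "0 < m"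
  shows "spread_g 1 j (Gm j m) = real (j+2) * real m - 1"
proof -
  let ?xs = "replicate (j+1) (- real m) @ replicate ((j+1)*m - 1) (-1)
      @ replicate ((j+2) * m - (j+2)) 0 @ [real ((j+1)*m) - 1, real ((j+1)*m)]"
  have "(1::nat) \<le> (j+1)*m" using m by simp
  hence "real 1 \<le> real ((j+1)*m)" by (rule of_nat_mono)
  hence q1: "1 \<le> real ((j+1)*m)" by (simp only: of_nat_1)
  have s: "sorted ?xs" using m q1 by (auto simp: sorted_append)
  have e: "eigs_desc (Gm j m) = [real ((j+1)*m), real ((j+1)*m) - 1] @ replicate ((j+2) * m - (j+2)) 0
       @ replicate ((j+1)*m - 1) (-1) @ replicate (j+1) (- real m)"
    using eigs_desc_sorted[OF Gm_proots[OF m] s] by (simp add: replicate_append_same)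
  have dr: "dim_row (Gm j m) = (j+2)*m + (j+1)*m" by (simp add: Gm_def)
  have idx: "dim_row (Gm j m) - j - 1 = 2 + ((j+2) * m - (j+2)) + ((j+1)*m - 1) + 0"
    unfolding dr using m by (cases m) auto
  have "eig (Gm j m) (dim_row (Gm j m) - j) = - real m" unfolding eig_def e
    by (simp only: idx nth_append_length_plus append_assoc[symmetric] length_append length_replicate list.size)
       (simp add: nth_append)
  moreover have "eig (Gm j m) 2 = real ((j+1)*m) - 1" unfolding eig_def e by simp
  moreover have "spread_g 1 j (Gm j m) = eig (Gm j m) 2 - eig (Gm j m) (dim_row (Gm j m) - j)"
    unfolding spread_g_def by (simp only: one_add_one)
  ultimately show ?thesis by (simp add: algebra_simps)
qed



lemma Gm_simple: "simple_adj ((j+2)*m + (j+1)*m) (Gm j m)"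
  unfolding simple_adj_def Gm_def by auto

lemma finite_simple: "finite {A. simple_adj n A}"
proof -
  let ?S = "{f :: nat \<times> nat \<Rightarrow> real. \<forall>x. (x \<in> {0..<n} \<times> {0..<n} \<longrightarrow> f x \<in> {0,1}) \<and> (x \<notin> {0..<n} \<times> {0..<n} \<longrightarrow> f x = 0)}"
  have fin: "finite ?S" by (rule finite_set_of_finite_funs) auto
  have "{A. simple_adj n A} \<subseteq> (\<lambda>f. mat n n f) ` ?S"
  proof
    fix A assume "A \<in> {A. simple_adj n A}"
    hence A: "simple_adj n A" by simp
    let ?f = "\<lambda>x. if x \<in> {0..<n} \<times> {0..<n} then A $$ x else 0"
    have "A = mat n n ?f" using A unfolding simple_adj_def by (auto intro!: eq_matI)
    moreover have "?f \<in> ?S" using A unfolding simple_adj_def by auto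
    ultimately show "A \<in> (\<lambda>f. mat n n f) ` ?S" by blast
  qed
  thus ?thesis by (rule finite_subset[OF _ finite_imageI[OF fin]])
qed

lemma spread_n_ge: assumes m: "0 < m"
  shows "spread_n 1 j ((j+2)*m + (j+1)*m) \<ge> real (j+2) * real m - 1"
proof -
  have fin: "finite {spread_g 1 j A | A. simple_adj ((j+2)*m + (j+1)*m) A}"
    using finite_image_set[OF finite_simple[of "(j+2)*m + (j+1)*m"], of "spread_g 1 j"] by simp
  have "spread_g 1 j (Gm j m) \<in> {spread_g 1 j A | A. simple_adj ((j+2)*m + (j+1)*m) A}"
    using Gm_simple by blast
  hence "spread_g 1 j (Gm j m) \<le> spread_n 1 j ((j+2)*m + (j+1)*m)"
    unfolding spread_n_def using fin by (rule Max_ge[rotated])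
  thus ?thesis using Gm_spread[OF m] by simp
qed

lemma part2: assumes conv: "convergent (\<lambda>n. spread_n 1 j n / real n)"
  shows "s_lim 1 j \<ge> (real j + 2) / (2 * real j + 3)"
proof -
  let ?f = "\<lambda>n. spread_n 1 j n / real n"
  let ?r = "\<lambda>m. (j+2) * Suc m + (j+1) * Suc m"
  have L: "?f \<longlonglongrightarrow> s_lim 1 j" using conv unfolding s_lim_def by (simp add: convergent_LIMSEQ_iff)
  have sm: "strict_mono ?r" unfolding strict_mono_Suc_iff by simp
  have L2: "(?f \<circ> ?r) \<longlonglongrightarrow> s_lim 1 j" by (rule LIMSEQ_subseq_LIMSEQ[OF L sm])
  let ?c = "(real j + 2) / (2 * real j + 3)"
  let ?h = "\<lambda>m. ?c - inverse (2 * real j + 3) * inverse (real (Suc m))"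
  have Lh: "?h \<longlonglongrightarrow> ?c - inverse (2 * real j + 3) * 0"
    by (intro tendsto_intros LIMSEQ_inverse_real_of_nat)
  have le: "?h m \<le> (?f \<circ> ?r) m" for m
  proof -
    have pos: "real (?r m) = (2 * real j + 3) * real (Suc m)" by (simp add: algebra_simps)
    have "?h m = (real (j+2) * real (Suc m) - 1) / real (?r m)"
    proof -
      have a: "2 * real j + 3 \<noteq> 0" "real (Suc m) \<noteq> 0" by simp_all
      have gen: "\<And>a D s :: real. D \<noteq> 0 \<Longrightarrow> s \<noteq> 0 \<Longrightarrow> a / D - inverse D * inverse s = (a * s - 1) / (D * s)"
        by (simp add: field_simps)
      have "real (j+2) = real j + 2" by simp
      thus ?thesis unfolding pos using gen[OF a, of "real j + 2"] by simp
    qed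
    also have "\<dots> \<le> spread_n 1 j (?r m) / real (?r m)"
      by (rule divide_right_mono[OF spread_n_ge]) simp_all
    finally show ?thesis by simp
  qed
  show ?thesis using LIMSEQ_le[OF Lh L2] le by auto
qed

theorem mainTheorem9:
  fixes j :: nat
  assumes "convergent (\<lambda>n. spread_n 1 j n / real n)"
  shows "eig (KK_loop j) 2 - eig (KK_loop j) ((2*j+3) - j) = real j + 2
         \<and> s_lim 1 j \<ge> (real j + 2) / (2 * real j + 3)"
  using part1 part2[OF assms] by blast


end
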